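(* Let $\Bbbk$ be a field, $n\ge2$, $q\in\Bbbk$ a primitive $n$-th root of unity, $T_n(q)$ the Taft algebra and $A$ a unital associative $\Bbbk$-algebra. Let $\cdot:T_n(q)\otimes A\to A$ be a partial action with $g\cdot1_A=0$. Then: (i) $(x\cdot1_A)^n\in Z(A)$; (ii) $g^i\cdot(x\cdot1_A)=q^{-i}(g^i\cdot1_A)(x\cdot1_A)$ for all $0\le i\le n-1$; (iii) if there is $i\in\{2,\dots,n-1\}$ such that $g^i\cdot a=a$ for all $a\in A$, then $x\cdot1_A=0$.
   Context: The Taft algebra $T_n(q)$ is the Hopf algebra generated by $g,x$ with relations $g^n=1$, $x^n=0$, $xg=qgx$, $g$ group-like, $\Delta(x)=x\otimes1+g\otimes x$, $\varepsilon(x)=0$. $Z(A)$ is the center of $A$. A partial action of a bialgebra $H$ on $A$ is a linear map $\cdot:H\otimes A\to A$ with $1_H\cdot a=a$, $h\cdot(ab)=(h_1\cdot a)(h_2\cdot b)$, $h\cdot(k\cdot a)=(h_1\cdot1_A)(h_2k\cdot a)$. *)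

theory Defs
  imports Main
begin

fun qbinom :: "'k::field \<Rightarrow> nat \<Rightarrow> nat \<Rightarrow> 'k" where
  "qbinom q j 0 = 1"
| "qbinom q 0 (Suc m) = 0"
| "qbinom q (Suc j) (Suc m) = qbinom q j m + q ^ (Suc m) * qbinom q j (Suc m)"

definition primitive_root :: "'k::field \<Rightarrow> nat \<Rightarrow> bool" where
  "primitive_root q n \<longleftrightarrow> q ^ n = 1 \<and> (\<forall>k. 0 < k \<and> k < n \<longrightarrow> q ^ k \<noteq> 1)"

text \<open>Elements of T_n(q) are coefficient functions h on the basis g^i x^j, (i,j) in
  {..<n} x {..<n}; values outside that index set are ignored.\<close>

definition tidx :: "nat \<Rightarrow> (nat \<times> nat) set" where
  "tidx n = {..<n} \<times> {..<n}"

definition tbas :: "nat \<times> nat \<Rightarrow> nat \<times> nat \<Rightarrow> 'k::field" where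
  "tbas r = (\<lambda>p. if p = r then 1 else 0)"

text \<open>(g^i x^j)(g^k x^l) = q^(jk) g^(i+k) x^(j+l) (zero if j+l >= n).\<close>
definition tbasis_mul :: "nat \<Rightarrow> 'k::field \<Rightarrow> nat \<times> nat \<Rightarrow> nat \<times> nat \<Rightarrow> nat \<times> nat \<Rightarrow> 'k" where
  "tbasis_mul n q r s = (case r of (i, j) \<Rightarrow> case s of (k, l) \<Rightarrow>
     (\<lambda>p. if j + l < n \<and> p = ((i + k) mod n, j + l) then q ^ (j * k) else 0))"

definition tmul :: "nat \<Rightarrow> 'k::field \<Rightarrow> (nat \<times> nat \<Rightarrow> 'k) \<Rightarrow> (nat \<times> nat \<Rightarrow> 'k) \<Rightarrow> nat \<times> nat \<Rightarrow> 'k" where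
  "tmul n q h h' = (\<lambda>p. \<Sum>r\<in>tidx n. \<Sum>s\<in>tidx n. h r * h' s * tbasis_mul n q r s p)"

text \<open>Comultiplication: Delta(g^i x^j) = sum_{m<=j} [j choose m]_q g^(i+m) x^(j-m) (x) g^i x^m,
  the unique algebra map with Delta(g) = g(x)g and Delta(x) = x(x)1 + g(x)x.
  An element of T (x) T is a coefficient function on pairs of basis indices.\<close>
definition tdelta :: "nat \<Rightarrow> 'k::field \<Rightarrow> (nat \<times> nat \<Rightarrow> 'k) \<Rightarrow> (nat \<times> nat) \<times> (nat \<times> nat) \<Rightarrow> 'k" where
  "tdelta n q h = (\<lambda>(p, r). \<Sum>(i, j)\<in>tidx n. h (i, j) *
      (\<Sum>m\<le>j. if p = ((i + m) mod n, j - m) \<and> r = (i, m) then qbinom q j m else 0))"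

definition kalgebra :: "('k::field \<Rightarrow> 'a::{ring, monoid_mult} \<Rightarrow> 'a) \<Rightarrow> bool" where
  "kalgebra smul \<longleftrightarrow>
     (\<forall>c a b. smul c (a + b) = smul c a + smul c b) \<and>
     (\<forall>c d a. smul (c + d) a = smul c a + smul d a) \<and>
     (\<forall>c d a. smul (c * d) a = smul c (smul d a)) \<and>
     (\<forall>a. smul 1 a = a) \<and>
     (\<forall>c a b. smul c (a * b) = smul c a * b) \<and>
     (\<forall>c a b. smul c (a * b) = a * smul c b)"

text \<open>act (i,j) a is (g^i x^j) . a; it is extended linearly in the first argument by pact.\<close>
definition pact :: "nat \<Rightarrow> ('k::field \<Rightarrow> 'a \<Rightarrow> 'a::{ring, monoid_mult}) \<Rightarrow> (nat \<times> nat \<Rightarrow> 'a \<Rightarrow> 'a)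
     \<Rightarrow> (nat \<times> nat \<Rightarrow> 'k) \<Rightarrow> 'a \<Rightarrow> 'a" where
  "pact n smul act h a = (\<Sum>r\<in>tidx n. smul (h r) (act r a))"

definition taft_partial_action ::
  "nat \<Rightarrow> 'k::field \<Rightarrow> ('k \<Rightarrow> 'a \<Rightarrow> 'a::{ring, monoid_mult}) \<Rightarrow> (nat \<times> nat \<Rightarrow> 'a \<Rightarrow> 'a) \<Rightarrow> bool" where
  "taft_partial_action n q smul act \<longleftrightarrow>
     \<comment> \<open>bilinearity (linearity in the algebra argument for each basis element)\<close>
     (\<forall>r a b. act r (a + b) = act r a + act r b) \<and>
     (\<forall>r c a. act r (smul c a) = smul c (act r a)) \<and>
     \<comment> \<open>1_H . a = a\<close>
     (\<forall>a. act (0, 0) a = a) \<and>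
     \<comment> \<open>h . (ab) = (h1 . a)(h2 . b)\<close>
     (\<forall>h a b. pact n smul act h (a * b) =
        (\<Sum>(p, r)\<in>tidx n \<times> tidx n. smul (tdelta n q h (p, r)) (act p a * act r b))) \<and>
     \<comment> \<open>h . (k . a) = (h1 . 1)(h2 k . a)\<close>
     (\<forall>h k a. pact n smul act h (pact n smul act k a) =
        (\<Sum>(p, r)\<in>tidx n \<times> tidx n. smul (tdelta n q h (p, r))
            (act p 1 * pact n smul act (tmul n q (tbas r) k) a)))"

end

theory Submission
  imports Defs
begin



locale tctx =
  fixes n :: nat and q :: "'k::field" and smul :: "'k \<Rightarrow> 'a::{ring, monoid_mult} \<Rightarrow> 'a"
    and act :: "nat \<times> nat \<Rightarrow> 'a \<Rightarrow> 'a"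
  assumes n2: "n \<ge> 2" and prim: "primitive_root q n" and kalg: "kalgebra smul"
    and tpa: "taft_partial_action n q smul act" and g1: "act (1, 0) 1 = 0"
begin

lemma smul_add_r: "smul c (a + b) = smul c a + smul c b" using kalg[unfolded kalgebra_def, THEN conjunct1] by blast
lemma smul_add_l: "smul (c + d) a = smul c a + smul d a" using kalg[unfolded kalgebra_def, THEN conjunct2, THEN conjunct1] by blast
lemma smul_assoc: "smul (c * d) a = smul c (smul d a)" using kalg[unfolded kalgebra_def, THEN conjunct2, THEN conjunct2, THEN conjunct1] by blast
lemma smul_one[simp]: "smul 1 a = a" using kalg[unfolded kalgebra_def, THEN conjunct2, THEN conjunct2, THEN conjunct2, THEN conjunct1] by blast
lemma smul_ml: "smul c (a * b) = smul c a * b" using kalg[unfolded kalgebra_def, THEN conjunct2, THEN conjunct2, THEN conjunct2, THEN conjunct2, THEN conjunct1] by blast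
lemma smul_mr: "smul c (a * b) = a * smul c b" using kalg[unfolded kalgebra_def, THEN conjunct2, THEN conjunct2, THEN conjunct2, THEN conjunct2, THEN conjunct2] by blast
lemma smul_zero_l[simp]: "smul 0 a = 0"
proof -
  have "smul (0 + 0) a = smul 0 a + smul 0 a" by (rule smul_add_l)
  then show ?thesis by simp
qed

definition sc :: "'k \<Rightarrow> 'a" where "sc c = smul c 1"

lemma smul_sc: "smul c a = sc c * a"
  using smul_ml[of c 1 a] by (simp add: sc_def)
lemma smul_sc_r: "smul c a = a * sc c"
  using smul_mr[of c a 1] by (simp add: sc_def)
lemma sc_central: "sc c * a = a * sc c"
proof -
  have "sc c * a = smul c a" by (rule smul_sc[symmetric])
  also have "\<dots> = a * sc c" by (rule smul_sc_r)
  finally show ?thesis .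
qed
lemma sc_add: "sc (c + d) = sc c + sc d" by (simp add: sc_def smul_add_l)
lemma sc_mult: "sc (c * d) = sc c * sc d"
  unfolding sc_def using smul_assoc[of c d 1] smul_ml[of c 1 "smul d 1"] by simp
lemma sc_one[simp]: "sc 1 = 1" by (simp add: sc_def)
lemma sc_zero[simp]: "sc 0 = 0" by (simp add: sc_def)
lemma sc_minus: "sc (- c) = - sc c"
proof -
  have "sc c + sc (- c) = 0" using sc_add[of c "-c"] by simp
  then show ?thesis by (rule add.inverse_unique[symmetric])
qed
lemma sc_diff: "sc (c - d) = sc c - sc d"
  using sc_add[of c "-d"] by (simp add: sc_minus)
lemma sc_assoc: "sc c * (sc d * a) = sc (c * d) * a"
  by (simp add: sc_mult mult.assoc)

lemma act_add: "act r (a + b) = act r a + act r b" using tpa[unfolded taft_partial_action_def, THEN conjunct1] by blast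
lemma act_smul: "act r (smul c a) = smul c (act r a)" using tpa[unfolded taft_partial_action_def, THEN conjunct2, THEN conjunct1] by blast
lemma act_00[simp]: "act (0, 0) a = a" using tpa[unfolded taft_partial_action_def, THEN conjunct2, THEN conjunct2, THEN conjunct1] by blast
lemma act_zero[simp]: "act r 0 = 0"
proof -
  have "act r (0 + 0) = act r 0 + act r 0" by (rule act_add)
  then show ?thesis by simp
qed
lemma ax_mult: "pact n smul act h (a * b) =
        (\<Sum>(p, r)\<in>tidx n \<times> tidx n. smul (tdelta n q h (p, r)) (act p a * act r b))"
  using tpa[unfolded taft_partial_action_def, THEN conjunct2, THEN conjunct2, THEN conjunct2, THEN conjunct1] by blast
lemma ax_comp: "pact n smul act h (pact n smul act k a) =
        (\<Sum>(p, r)\<in>tidx n \<times> tidx n. smul (tdelta n q h (p, r))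
            (act p 1 * pact n smul act (tmul n q (tbas r) k) a))"
  using tpa[unfolded taft_partial_action_def, THEN conjunct2, THEN conjunct2, THEN conjunct2, THEN conjunct2] by blast

lemma fin_tidx[simp]: "finite (tidx n)" by (simp add: tidx_def)

lemma pact_delta: assumes "r \<in> tidx n"
  shows "pact n smul act (\<lambda>p. if p = r then c else 0) a = smul c (act r a)"
proof -
  have "pact n smul act (\<lambda>p. if p = r then c else 0) a
      = (\<Sum>s\<in>tidx n. if s = r then smul c (act r a) else 0)"
    unfolding pact_def by (rule sum.cong) auto
  also have "\<dots> = smul c (act r a)" using assms by (simp add: sum.delta)
  finally show ?thesis .
qed

lemma pact_zerof: "pact n smul act (\<lambda>p. 0) a = 0"
  unfolding pact_def by simp

lemma pact_tbas: "r \<in> tidx n \<Longrightarrow> pact n smul act (tbas r) a = act r a"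
  unfolding tbas_def using pact_delta[of r 1 a] by simp

lemma if01_mult: "(if P then 1 else 0) * (x::'b::semiring_1) = (if P then x else 0)" by simp

lemma tmul_tbas: assumes "r \<in> tidx n" "s \<in> tidx n"
  shows "tmul n q (tbas r) (tbas s) = tbasis_mul n q r s"
proof
  fix p
  have e: "(\<Sum>s'\<in>tidx n. tbas r r' * tbas s s' * tbasis_mul n q r' s' p) =
     (if r' = r then tbasis_mul n q r s p else 0)" for r'
  proof (cases "r' = r")
    case True
    have "(\<Sum>s'\<in>tidx n. tbas r r' * tbas s s' * tbasis_mul n q r' s' p) =
       (\<Sum>s'\<in>tidx n. if s' = s then tbasis_mul n q r s' p else 0)"
      using True by (intro sum.cong refl) (simp add: tbas_def)
    then show ?thesis using True assms by (simp add: sum.delta)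
  next
    case False
    then show ?thesis by (simp add: tbas_def)
  qed
  have "tmul n q (tbas r) (tbas s) p = (\<Sum>r'\<in>tidx n. if r' = r then tbasis_mul n q r s p else 0)"
    unfolding tmul_def using e by simp
  also have "\<dots> = tbasis_mul n q r s p" using assms by (simp add: sum.delta)
  finally show "tmul n q (tbas r) (tbas s) p = tbasis_mul n q r s p" .
qed

lemma pact_tmul: assumes "i < n" "j < n" "k < n" "l < n"
  shows "pact n smul act (tmul n q (tbas (i, j)) (tbas (k, l))) a =
    (if j + l < n then smul (q ^ (j * k)) (act ((i + k) mod n, j + l) a) else 0)"
proof -
  have t: "tmul n q (tbas (i, j)) (tbas (k, l)) = tbasis_mul n q (i, j) (k, l)"
    using assms by (intro tmul_tbas) (auto simp: tidx_def)
  show ?thesis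
  proof (cases "j + l < n")
    case True
    have "tbasis_mul n q (i, j) (k, l) = (\<lambda>p. if p = ((i + k) mod n, j + l) then q ^ (j * k) else 0)"
      using True unfolding tbasis_mul_def by auto
    moreover have "((i + k) mod n, j + l) \<in> tidx n" using True assms by (auto simp: tidx_def)
    ultimately show ?thesis using True t pact_delta by simp
  next
    case False
    have "tbasis_mul n q (i, j) (k, l) = (\<lambda>p. 0)"
      using False unfolding tbasis_mul_def by auto
    then show ?thesis using False t pact_zerof by simp
  qed
qed

lemma tdelta_tbas: assumes "(i, j) \<in> tidx n"
  shows "tdelta n q (tbas (i, j)) (p, r) =
     (\<Sum>m\<le>j. if p = ((i + m) mod n, j - m) \<and> r = (i, m) then qbinom q j m else 0)"
proof -
  define S where "S = (\<lambda>ia ja. (\<Sum>m\<le>ja. if p = ((ia + m) mod n, ja - m) \<and> r = (ia, m) then qbinom q ja m else 0))"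
  have f: "(\<lambda>x. case x of (ia, ja) \<Rightarrow> tbas (i, j) (ia, ja) * S ia ja) = (\<lambda>x. if x = (i, j) then S (fst x) (snd x) else 0)"
    by (auto simp: tbas_def fun_eq_iff split: prod.split)
  have "tdelta n q (tbas (i, j)) (p, r) = (\<Sum>x\<in>tidx n. case x of (ia, ja) \<Rightarrow> tbas (i, j) (ia, ja) * S ia ja)"
    unfolding tdelta_def S_def by simp
  also have "\<dots> = (\<Sum>x\<in>tidx n. if x = (i, j) then S (fst x) (snd x) else 0)" by (simp only: f)
  also have "\<dots> = S i j" using assms by (simp only: sum.delta[OF fin_tidx]) simp
  finally show ?thesis unfolding S_def .
qed

end


context tctx begin

lemma n_pos: "0 < n" using n2 by simp

lemma tdelta0: assumes "i < n"
  shows "tdelta n q (tbas (i, 0)) (p, r) = (if p = (i, 0) \<and> r = (i, 0) then 1 else 0)"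
  using assms n_pos by (subst tdelta_tbas) (auto simp: tidx_def)

lemma tdelta1: assumes "i < n"
  shows "tdelta n q (tbas (i, 1)) (p, r) = (if p = (i, 1) \<and> r = (i, 0) then 1 else 0)
     + (if p = ((i + 1) mod n, 0) \<and> r = (i, 1) then 1 else 0)"
proof -
  have "(i, 1) \<in> tidx n" using assms n2 by (auto simp: tidx_def)
  then have "tdelta n q (tbas (i, 1)) (p, r) =
     (\<Sum>m\<le>1. if p = ((i + m) mod n, 1 - m) \<and> r = (i, m) then qbinom q 1 m else 0)"
    by (rule tdelta_tbas)
  also have "\<dots> = (if p = (i, 1) \<and> r = (i, 0) then 1 else 0)
     + (if p = ((i + 1) mod n, 0) \<and> r = (i, 1) then 1 else 0)"
    using assms by (simp only: One_nat_def sum.atMost_Suc atMost_0 sum.insert sum.empty finite.emptyI empty_iff not_False_eq_True) simp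
  finally show ?thesis .
qed

lemma sum_delta2: assumes "x \<in> S" "finite S"
  shows "(\<Sum>(p, r)\<in>S. if (p, r) = x then F p r else 0) = F (fst x) (snd x)"
proof -
  have "(\<Sum>(p, r)\<in>S. if (p, r) = x then F p r else 0) = (\<Sum>y\<in>S. if y = x then F (fst y) (snd y) else 0)"
    by (intro sum.cong refl) (auto split: prod.split)
  also have "\<dots> = F (fst x) (snd x)" using assms by (simp only: sum.delta) simp
  finally show ?thesis .
qed

lemma smul_if01: "smul (if P then 1 else 0) v = (if P then v else 0)" by simp

lemma sum_td0: assumes "i < n"
  shows "(\<Sum>(p, r)\<in>tidx n \<times> tidx n. smul (tdelta n q (tbas (i, 0)) (p, r)) (F p r)) = F (i, 0) (i, 0)"
proof -
  have "(\<Sum>(p, r)\<in>tidx n \<times> tidx n. smul (tdelta n q (tbas (i, 0)) (p, r)) (F p r))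
     = (\<Sum>(p, r)\<in>tidx n \<times> tidx n. if (p, r) = ((i, 0), (i, 0)) then F p r else 0)"
    using assms by (intro sum.cong refl) (clarify, simp only: tdelta0[OF assms] smul_if01, simp)
  also have "\<dots> = F (i, 0) (i, 0)" using assms n_pos
    by (subst sum_delta2) (auto simp: tidx_def)
  finally show ?thesis .
qed

lemma sum_td1: assumes "i < n"
  shows "(\<Sum>(p, r)\<in>tidx n \<times> tidx n. smul (tdelta n q (tbas (i, 1)) (p, r)) (F p r))
    = F (i, 1) (i, 0) + F ((i + 1) mod n, 0) (i, 1)"
proof -
  have "(\<Sum>(p, r)\<in>tidx n \<times> tidx n. smul (tdelta n q (tbas (i, 1)) (p, r)) (F p r))
     = (\<Sum>(p, r)\<in>tidx n \<times> tidx n. (if (p, r) = ((i, 1), (i, 0)) then F p r else 0)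
          + (if (p, r) = (((i + 1) mod n, 0), (i, 1)) then F p r else 0))"
    using assms by (intro sum.cong refl) (clarify, simp only: tdelta1[OF assms] smul_add_l smul_if01, simp)
  also have "\<dots> = (\<Sum>(p, r)\<in>tidx n \<times> tidx n. (if (p, r) = ((i, 1), (i, 0)) then F p r else 0))
      + (\<Sum>(p, r)\<in>tidx n \<times> tidx n. (if (p, r) = (((i + 1) mod n, 0), (i, 1)) then F p r else 0))"
    unfolding split_beta by (rule sum.distrib)
  also have "\<dots> = F (i, 1) (i, 0) + F ((i + 1) mod n, 0) (i, 1)"
  proof -
    have m1: "((i, 1), (i, 0)) \<in> tidx n \<times> tidx n" and m2: "(((i + 1) mod n, 0), (i, 1)) \<in> tidx n \<times> tidx n"
      using assms n2 by (auto simp: tidx_def)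
    have fin: "finite (tidx n \<times> tidx n)" by simp
    show ?thesis by (simp only: sum_delta2[OF m1 fin] sum_delta2[OF m2 fin] fst_conv snd_conv)
  qed
  finally show ?thesis .
qed

lemma M0: "i < n \<Longrightarrow> act (i, 0) (a * b) = act (i, 0) a * act (i, 0) b"
  using ax_mult[of "tbas (i, 0)" a b] sum_td0[of i "\<lambda>p r. act p a * act r b"] n_pos
  by (simp add: pact_tbas tidx_def)

lemma M1: "i < n \<Longrightarrow> act (i, 1) (a * b) = act (i, 1) a * act (i, 0) b + act ((i + 1) mod n, 0) a * act (i, 1) b"
  using ax_mult[of "tbas (i, 1)" a b] sum_td1[of i "\<lambda>p r. act p a * act r b"] n2
  by (simp add: pact_tbas tidx_def)

lemma C0: "i < n \<Longrightarrow> k \<in> tidx n \<Longrightarrow>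
   act (i, 0) (act k a) = act (i, 0) 1 * pact n smul act (tmul n q (tbas (i, 0)) (tbas k)) a"
  using ax_comp[of "tbas (i, 0)" "tbas k" a] sum_td0[of i "\<lambda>p r. act p 1 * pact n smul act (tmul n q (tbas r) (tbas k)) a"] n_pos
  by (simp add: pact_tbas tidx_def)

lemma C1: "i < n \<Longrightarrow> k \<in> tidx n \<Longrightarrow>
   act (i, 1) (act k a) = act (i, 1) 1 * pact n smul act (tmul n q (tbas (i, 0)) (tbas k)) a
     + act ((i + 1) mod n, 0) 1 * pact n smul act (tmul n q (tbas (i, 1)) (tbas k)) a"
  using ax_comp[of "tbas (i, 1)" "tbas k" a] sum_td1[of i "\<lambda>p r. act p 1 * pact n smul act (tmul n q (tbas r) (tbas k)) a"] n2
  by (simp add: pact_tbas tidx_def)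

end


context tctx begin

lemma qn: "q ^ n = 1" using prim by (simp add: primitive_root_def)
lemma qk: "0 < k \<Longrightarrow> k < n \<Longrightarrow> q ^ k \<noteq> 1" using prim by (simp add: primitive_root_def)
lemma q_nz: "q \<noteq> 0" using qn n_pos by (metis power_0_left less_not_refl2 zero_neq_one)
lemma q_pow_mod: "q ^ (m mod n) = q ^ m"
proof -
  have "q ^ m = q ^ (n * (m div n) + m mod n)" by simp
  also have "\<dots> = q ^ (m mod n)" by (simp only: power_add power_mult qn power_one mult_1_left)
  finally show ?thesis by (rule sym)
qed

definition r :: 'k where "r = inverse q"
lemma rq: "r * q = 1" using q_nz by (simp add: r_def)
lemma rn: "r ^ n = 1" by (simp add: r_def power_inverse qn)
lemma rk: "0 < k \<Longrightarrow> k < n \<Longrightarrow> r ^ k \<noteq> 1" using qk by (simp add: r_def power_inverse)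
lemma r_pow_mod: "r ^ (m mod n) = r ^ m"
proof -
  have "r ^ m = r ^ (n * (m div n) + m mod n)" by simp
  also have "\<dots> = r ^ (m mod n)" by (simp only: power_add power_mult rn power_one mult_1_left)
  finally show ?thesis by (rule sym)
qed
lemma rq_pow: "r ^ k * q ^ k = 1" by (simp add: rq flip: power_mult_distrib)

abbreviation y where "y \<equiv> act (0, 1) 1"
abbreviation z where "z \<equiv> act (n - 1, 1) 1"

lemma act_g: "act (1, 0) a = 0"
  using M0[of 1 a 1] n2 g1 by simp

lemma idx_n1: "i < n \<Longrightarrow> (n - 1 + Suc i mod n) mod n = i"
proof -
  assume i: "i < n"
  show ?thesis
  proof (cases "Suc i < n")
    case True
    then have "n - 1 + Suc i mod n = n + i" using n2 by simp
    then show ?thesis using i by simp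
  next
    case False
    then have "Suc i = n" using i by simp
    then show ?thesis using n2 by simp
  qed
qed

lemma idx_n1': "i < n \<Longrightarrow> (n + Suc i mod n - Suc 0) mod n = i"
  using idx_n1[of i] n2 by simp

lemma e_last: "act (n - 1, 0) 1 = 0"
proof -
  have "act (n - 1, 0) (act (1, 0) 1) = act (n - 1, 0) 1 * pact n smul act (tmul n q (tbas (n - 1, 0)) (tbas (1, 0))) 1"
    using n2 by (intro C0) (auto simp: tidx_def)
  also have "pact n smul act (tmul n q (tbas (n - 1, 0)) (tbas (1, 0))) 1 = 1"
    using n2 by (subst pact_tmul) auto
  finally show ?thesis using g1 by simp
qed

lemma act_last: "act (n - 1, 0) a = 0"
  using M0[of "n - 1" 1 a] n2 e_last by simp

lemma w_mult: "act (n - 1, 1) a = a * z"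
  using M1[of "n - 1" a 1] n2 e_last by simp

lemma F4: assumes "i < n" "j < n"
  shows "act (Suc i mod n, j) a * z = z * act (i, j) a + (if Suc j < n then smul (q ^ Suc i) (act (i, Suc j) a) else 0)"
proof -
  have k: "(Suc i mod n, j) \<in> tidx n" using assms n_pos by (auto simp: tidx_def)
  have "act (n - 1, 1) (act (Suc i mod n, j) a) = z * pact n smul act (tmul n q (tbas (n - 1, 0)) (tbas (Suc i mod n, j))) a
     + act ((n - 1 + 1) mod n, 0) 1 * pact n smul act (tmul n q (tbas (n - 1, 1)) (tbas (Suc i mod n, j))) a"
    using n2 k by (intro C1) auto
  also have "pact n smul act (tmul n q (tbas (n - 1, 0)) (tbas (Suc i mod n, j))) a = act (i, j) a"
    using n2 assms by (subst pact_tmul) (auto simp: idx_n1')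
  also have "pact n smul act (tmul n q (tbas (n - 1, 1)) (tbas (Suc i mod n, j))) a
     = (if Suc j < n then smul (q ^ Suc i) (act (i, Suc j) a) else 0)"
    using n2 assms by (subst pact_tmul) (auto simp: idx_n1' q_pow_mod)
  also have "(n - 1 + 1) mod n = 0" using n2 by simp
  finally have "act (n - 1, 1) (act (Suc i mod n, j) a) = z * act (i, j) a + act (0, 0) 1 *
     (if Suc j < n then smul (q ^ Suc i) (act (i, Suc j) a) else 0)" .
  then show ?thesis using w_mult[of "act (Suc i mod n, j) a"] by simp
qed

lemma z_eq: "z = - (sc q * y)"
proof -
  have "act (Suc 0 mod n, 0) 1 * z = z * act (0, 0) 1 + (if Suc 0 < n then smul (q ^ Suc 0) (act (0, Suc 0) 1) else 0)"
    using F4[of 0 0 1] n2 by simp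
  then have "0 = z + smul q y" using n2 act_g by simp
  then show ?thesis by (simp add: smul_sc eq_neg_iff_add_eq_0)
qed

lemma smul_zero_r[simp]: "smul c 0 = 0" by (simp add: smul_sc)

lemma rec: assumes "i < n" "j < n"
  shows "(if Suc j < n then act (i, Suc j) a else 0) = sc (r ^ i) * (y * act (i, j) a - act (Suc i mod n, j) a * y)"
proof -
  define P where "P = act (Suc i mod n, j) a"
  define Q where "Q = act (i, j) a"
  define T where "T = (if Suc j < n then act (i, Suc j) a else 0)"
  have h: "P * z = z * Q + sc (q ^ Suc i) * T"
    using F4[OF assms, of a] unfolding P_def Q_def T_def by (simp add: smul_sc)
  have "P * (sc q * y) = sc q * (P * y)"
    by (simp only: mult.assoc[symmetric] sc_central[of q P])
  then have h1: "P * z = - (sc q * (P * y))"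
    unfolding z_eq by simp
  have h2: "z * Q = - (sc q * (y * Q))"
    unfolding z_eq by (simp add: mult.assoc)
  have h3: "sc (q ^ Suc i) * T = sc q * (y * Q - P * y)"
  proof -
    have "sc (q ^ Suc i) * T = P * z - z * Q" using h by simp
    also have "\<dots> = sc q * (y * Q - P * y)" unfolding h1 h2 by (simp add: algebra_simps)
    finally show ?thesis .
  qed
  have "T = sc (r ^ Suc i) * (sc (q ^ Suc i) * T)"
    by (simp only: sc_assoc rq_pow sc_one mult_1_left)
  also have "\<dots> = sc (r ^ Suc i * q) * (y * Q - P * y)" unfolding h3 by (simp add: sc_assoc)
  also have "r ^ Suc i * q = r ^ i" using rq by (simp add: mult.commute)
  finally show ?thesis unfolding T_def P_def Q_def .
qed

definition G :: "nat \<Rightarrow> nat \<Rightarrow> 'a \<Rightarrow> 'a" where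
  "G i j a = (if j < n then act (i mod n, j) a else 0)"

lemma G_rec: "j < n \<Longrightarrow> G i (Suc j) a = sc (r ^ i) * (y * G i j a - G (Suc i) j a * y)"
  using rec[of "i mod n" j a] n_pos unfolding G_def by (simp add: mod_Suc_eq r_pow_mod)

end



fun dd :: "'k::field \<Rightarrow> nat \<Rightarrow> nat \<Rightarrow> 'k" where
  "dd c 0 m = (if m = 0 then 1 else 0)"
| "dd c (Suc j) 0 = 1"
| "dd c (Suc j) (Suc m) = dd c j (Suc m) - c ^ j * dd c j m"

lemma dd_0[simp]: "dd c j 0 = 1" by (cases j) auto

lemma dd_gt: "j < m \<Longrightarrow> dd c j m = 0"
proof (induction j arbitrary: m)
  case 0 then show ?case by simp
next
  case (Suc j)
  then obtain m' where "m = Suc m'" by (cases m) auto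
  then show ?case using Suc by simp
qed

lemma dd_B: "dd c (Suc j) (Suc m) = c ^ Suc m * dd c j (Suc m) - c ^ m * dd c j m"
proof (induction j arbitrary: m)
  case 0 then show ?case by (cases m) auto
next
  case (Suc j)
  show ?case
  proof (cases m)
    case 0
    have "dd c (Suc j) (Suc 0) = c * dd c j (Suc 0) - 1" using Suc.IH[of 0] by simp
    then show ?thesis using 0 by (simp add: algebra_simps)
  next
    case (Suc m')
    have i1: "dd c (Suc j) (Suc m) = c ^ Suc m * dd c j (Suc m) - c ^ m * dd c j m" by (rule Suc.IH)
    have i2: "dd c (Suc j) m = c ^ m * dd c j m - c ^ m' * dd c j m'" unfolding \<open>m = Suc m'\<close> by (rule Suc.IH)
    have A1: "dd c (Suc j) (Suc m) = dd c j (Suc m) - c ^ j * dd c j m" by simp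
    have A2: "dd c (Suc j) m = dd c j m - c ^ j * dd c j m'" unfolding \<open>m = Suc m'\<close> by simp
    have L: "dd c (Suc (Suc j)) (Suc m) = dd c (Suc j) (Suc m) - c ^ Suc j * dd c (Suc j) m" by simp
    have "dd c (Suc (Suc j)) (Suc m) = (c ^ Suc m * dd c j (Suc m) - c ^ m * dd c j m)
       - c ^ Suc j * (c ^ m * dd c j m - c ^ m' * dd c j m')"
      unfolding L i1 i2 ..
    also have "\<dots> = c ^ Suc m * (dd c j (Suc m) - c ^ j * dd c j m) - c ^ m * (dd c j m - c ^ j * dd c j m')"
      unfolding \<open>m = Suc m'\<close> by (simp add: algebra_simps)
    finally show ?thesis unfolding A1 A2 .
  qed
qed

lemma dd_vanish: assumes "c ^ n = 1" "0 < m" "m < n" "c ^ m \<noteq> 1"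
  shows "dd c n m = 0"
proof -
  obtain n' where n: "n = Suc n'" using assms by (cases n) auto
  obtain m' where m: "m = Suc m'" using assms by (cases m) auto
  have A: "dd c n m = dd c n' m - c ^ n' * dd c n' m'" unfolding n m by simp
  have B: "dd c n m = c ^ m * dd c n' m - c ^ m' * dd c n' m'" unfolding n m by (rule dd_B)
  have cc: "c ^ m * c ^ n' = c ^ m'"
  proof -
    have "c ^ m * c ^ n' = c ^ m' * c ^ n" unfolding m n by (simp add: algebra_simps)
    then show ?thesis using assms by simp
  qed
  have "c ^ m * dd c n m = dd c n m"
  proof -
    have "c ^ m * dd c n m = c ^ m * dd c n' m - (c ^ m * c ^ n') * dd c n' m'"
      unfolding A by (simp add: algebra_simps)
    also have "\<dots> = dd c n m" unfolding cc B ..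
    finally show ?thesis .
  qed
  then have "(c ^ m - 1) * dd c n m = 0" by (simp add: algebra_simps)
  then show ?thesis using assms by simp
qed

context tctx begin

definition H :: "nat \<Rightarrow> nat \<Rightarrow> 'a \<Rightarrow> 'a" where
  "H i j a = (\<Sum>m\<le>j. sc (r ^ (i * j) * dd r j m) * (y ^ (j - m) * act ((i + m) mod n, 0) a * y ^ m))"

lemma sc_left_comm: "b * (sc c * x) = sc c * (b * x)"
  by (metis mult.assoc sc_central)

lemma H_rec: "H i (Suc j) a = sc (r ^ i) * (y * H i j a - H (Suc i) j a * y)"
proof -
  define X where "X m = y ^ (Suc j - m) * act ((i + m) mod n, 0) a * y ^ m" for m
  have a: "y * H i j a = (\<Sum>m\<le>Suc j. sc (r ^ (i * j) * dd r j m) * X m)"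
  proof -
    have "y * H i j a = (\<Sum>m\<le>j. sc (r ^ (i * j) * dd r j m) * X m)"
      unfolding H_def sum_distrib_left
    proof (intro sum.cong refl)
      fix m assume "m \<in> {..j}"
      then have "Suc j - m = Suc (j - m)" by auto
      then show "y * (sc (r ^ (i * j) * dd r j m) * (y ^ (j - m) * act ((i + m) mod n, 0) a * y ^ m))
          = sc (r ^ (i * j) * dd r j m) * X m"
        unfolding X_def by (simp add: sc_left_comm mult.assoc)
    qed
    also have "\<dots> = (\<Sum>m\<le>Suc j. sc (r ^ (i * j) * dd r j m) * X m)"
      by (simp add: dd_gt)
    finally show ?thesis .
  qed
  have b: "H (Suc i) j a * y = (\<Sum>m\<le>j. sc (r ^ (Suc i * j) * dd r j m) * X (Suc m))"
    unfolding H_def sum_distrib_right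
  proof (intro sum.cong refl)
    fix m assume "m \<in> {..j}"
    show "sc (r ^ (Suc i * j) * dd r j m) * (y ^ (j - m) * act ((Suc i + m) mod n, 0) a * y ^ m) * y
        = sc (r ^ (Suc i * j) * dd r j m) * X (Suc m)"
      unfolding X_def by (simp add: mult.assoc power_Suc2 del: power_Suc)
  qed
  have rhs: "sc (r ^ i) * (y * H i j a - H (Suc i) j a * y) =
     sc (r ^ i * r ^ (i * j)) * X 0 + (\<Sum>m\<le>j. sc (r ^ i * (r ^ (i * j) * dd r j (Suc m) - r ^ (Suc i * j) * dd r j m)) * X (Suc m))"
  proof -
    have "y * H i j a = sc (r ^ (i * j)) * X 0 + (\<Sum>m\<le>j. sc (r ^ (i * j) * dd r j (Suc m)) * X (Suc m))"
      unfolding a sum.atMost_Suc_shift by simp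
    then have "y * H i j a - H (Suc i) j a * y = sc (r ^ (i * j)) * X 0 +
        (\<Sum>m\<le>j. sc (r ^ (i * j) * dd r j (Suc m)) * X (Suc m) - sc (r ^ (Suc i * j) * dd r j m) * X (Suc m))"
      unfolding b sum_subtractf by (simp add: algebra_simps)
    also have "\<dots> = sc (r ^ (i * j)) * X 0 +
        (\<Sum>m\<le>j. sc (r ^ (i * j) * dd r j (Suc m) - r ^ (Suc i * j) * dd r j m) * X (Suc m))"
      by (simp add: sc_diff left_diff_distrib)
    finally show ?thesis
      by (simp add: distrib_left sum_distrib_left sc_assoc)
  qed
  have lhs: "H i (Suc j) a = sc (r ^ (i * Suc j)) * X 0 + (\<Sum>m\<le>j. sc (r ^ (i * Suc j) * dd r (Suc j) (Suc m)) * X (Suc m))"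
    unfolding H_def X_def sum.atMost_Suc_shift by simp
  have c1: "r ^ (i * Suc j) = r ^ i * r ^ (i * j)" by (simp add: power_add)
  have c2: "r ^ (i * Suc j) * dd r (Suc j) (Suc m) = r ^ i * (r ^ (i * j) * dd r j (Suc m) - r ^ (Suc i * j) * dd r j m)" for m
    by (simp add: power_add algebra_simps)
  show ?thesis unfolding lhs rhs c1[symmetric] c2 ..
qed

lemma G_H: "j \<le> n \<Longrightarrow> G i j a = H i j a"
proof (induction j arbitrary: i)
  case 0 then show ?case using n_pos by (simp add: G_def H_def)
next
  case (Suc j)
  then have "j < n" by simp
  then show ?case using Suc by (simp add: G_rec H_rec)
qed

end


context tctx begin

lemma central_yn: "y ^ n * a = a * y ^ n"
proof -
  have H0: "H 0 n b = 0" for b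
  proof -
    have "G 0 n b = 0" by (simp add: G_def)
    then show ?thesis using G_H[of n 0 b] by simp
  qed
  define c where "c = dd r n n"
  have key: "y ^ n * b + sc c * (b * y ^ n) = 0" for b
  proof -
    define f where "f m = sc (r ^ (0 * n) * dd r n m) * (y ^ (n - m) * act ((0 + m) mod n, 0) b * y ^ m)" for m
    have "H 0 n b = sum f {..n}" unfolding H_def f_def ..
    also have "\<dots> = sum f {0, n}"
    proof (rule sum.mono_neutral_right)
      show "finite {..n}" by simp
      show "{0, n} \<subseteq> {..n}" by auto
      show "\<forall>m\<in>{..n} - {0, n}. f m = 0"
      proof
        fix m assume m: "m \<in> {..n} - {0, n}"
        then have "0 < m" "m < n" by auto
        then have "dd r n m = 0" using rn rk by (intro dd_vanish) auto
        then show "f m = 0" by (simp add: f_def)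
      qed
    qed
    also have "\<dots> = f 0 + f n" using n_pos by simp
    also have "\<dots> = y ^ n * b + sc c * (b * y ^ n)" by (simp add: f_def c_def)
    finally show ?thesis using H0 by simp
  qed
  have k1: "y ^ n = - (sc c * y ^ n)" using key[of 1] by (simp add: eq_neg_iff_add_eq_0)
  have "a * y ^ n = - (sc c * (a * y ^ n))"
    by (subst k1) (simp add: sc_left_comm)
  also have "\<dots> = y ^ n * a" using key[of a, folded eq_neg_iff_add_eq_0] by (rule sym)
  finally show ?thesis by (rule sym)
qed

lemma part2: assumes i: "i < n"
  shows "act (i, 0) y = smul (inverse q ^ i) (act (i, 0) 1 * y)"
proof -
  define e where "e = act (i, 0) 1"
  define e' where "e' = act (Suc i mod n, 0) 1"
  have A: "act (i, 0) y = e * act (i, 1) 1"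
  proof -
    have "act (i, 0) y = e * pact n smul act (tmul n q (tbas (i, 0)) (tbas (0, 1))) 1"
      unfolding e_def using i n2 by (intro C0) (auto simp: tidx_def)
    also have "pact n smul act (tmul n q (tbas (i, 0)) (tbas (0, 1))) 1 = act (i, 1) 1"
      using i n2 by (subst pact_tmul) auto
    finally show ?thesis .
  qed
  have B: "act (i, 1) 1 = sc (r ^ i) * (y * e - e' * y)"
    using rec[of i 0 1] i n2 unfolding e_def e'_def by simp
  have D: "e * e' = 0"
  proof -
    have "act (i, 0) (act (1, 0) 1) = e * pact n smul act (tmul n q (tbas (i, 0)) (tbas (1, 0))) 1"
      unfolding e_def using i n2 by (intro C0) (auto simp: tidx_def)
    also have "pact n smul act (tmul n q (tbas (i, 0)) (tbas (1, 0))) 1 = e'"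
      unfolding e'_def using i n2 by (subst pact_tmul) auto
    finally show ?thesis using g1 by simp
  qed
  have E: "e * b = e * b * e" for b
  proof -
    have "act (i, 0) (act ((n - i) mod n, 0) b) = e * pact n smul act (tmul n q (tbas (i, 0)) (tbas ((n - i) mod n, 0))) b"
      unfolding e_def using i n2 by (intro C0) (auto simp: tidx_def)
    also have "pact n smul act (tmul n q (tbas (i, 0)) (tbas ((n - i) mod n, 0))) b = b"
    proof -
      have "(i + (n - i) mod n) mod n = 0" using i by (simp add: mod_add_right_eq)
      then show ?thesis using i n2 by (subst pact_tmul) auto
    qed
    finally have 1: "act (i, 0) (act ((n - i) mod n, 0) b) = e * b" .
    have "act (i, 0) (act ((n - i) mod n, 0) b * 1) = act (i, 0) (act ((n - i) mod n, 0) b) * e"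
      unfolding e_def using M0 i by blast
    then show ?thesis using 1 by simp
  qed
  have "act (i, 0) y = sc (r ^ i) * (e * y * e - e * e' * y)"
    unfolding A B by (simp add: sc_left_comm right_diff_distrib mult.assoc)
  also have "\<dots> = sc (r ^ i) * (e * y)" using E[of y] D by simp
  finally show ?thesis unfolding e_def by (simp add: smul_sc r_def)
qed

lemma part3: assumes "i \<in> {2..n-1}" "\<forall>a. act (i, 0) a = a" shows "y = 0"
proof -
  have i: "0 < i" "i < n" using assms(1) n2 by auto
  have "y = sc (r ^ i) * y" using part2[OF i(2)] assms(2) by (simp add: smul_sc r_def)
  then have "sc (1 - r ^ i) * y = 0" by (simp add: sc_diff left_diff_distrib)
  then have "sc (inverse (1 - r ^ i)) * (sc (1 - r ^ i) * y) = 0" by simp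
  moreover have "1 - r ^ i \<noteq> 0" using rk[OF i] by simp
  ultimately show ?thesis by (simp add: sc_assoc)
qed

end

theorem corollary3p4:
  fixes q :: "'k::field" and n :: nat
    and smul :: "'k \<Rightarrow> 'a::{ring, monoid_mult} \<Rightarrow> 'a"
    and act :: "nat \<times> nat \<Rightarrow> 'a \<Rightarrow> 'a"
  assumes "n \<ge> 2"
    and "primitive_root q n"
    and "kalgebra smul"
    and "taft_partial_action n q smul act"
    and "act (1, 0) 1 = 0"
  shows "(\<forall>a. (act (0, 1) 1) ^ n * a = a * (act (0, 1) 1) ^ n)
       \<and> (\<forall>i < n. act (i, 0) (act (0, 1) 1) = smul ((inverse q) ^ i) (act (i, 0) 1 * act (0, 1) 1))
       \<and> ((\<exists>i\<in>{2..n-1}. \<forall>a. act (i, 0) a = a) \<longrightarrow> act (0, 1) 1 = 0)"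
proof -
  interpret tctx n q smul act using assms by unfold_locales
  show ?thesis using central_yn part2 part3 by blast
qed



end
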